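(* For integers $r\ge 3$ and $n \ge \frac{(r-1)(2r+1)}{2}$, $$\mathrm{co}^{+}\mathrm{ex}(n,\mathrm{T}_r)=\left\lfloor \frac{n}{r}\right\rfloor,$$ where $\mathrm{co}^{+}\mathrm{ex}(n,\mathrm{T}_r)$ is the maximum of $\delta_{r-1}^{+}(\mathcal{H})$ over all $n$-vertex $\mathrm{T}_r$-free $r$-graphs $\mathcal{H}$.
   Context: An $r$-graph $\mathcal{H}$ is a collection of $r$-subsets (edges) of a finite vertex set $V(\mathcal{H})$. The shadow is $\partial\mathcal{H}=\{e\in\binom{V(\mathcal{H})}{r-1}\colon e\subseteq E \text{ for some } E\in\mathcal{H}\}$. For $e\in\partial\mathcal{H}$, $N_{\mathcal{H}}(e)=\{v\in V(\mathcal{H})\colon e\cup\{v\}\in\mathcal{H}\}$. The minimum positive codegree is $\delta_{r-1}^{+}(\mathcal{H})=\min\{|N_{\mathcal{H}}(e)|\colon e\in\partial\mathcal{H}\}$ (for the empty $r$-graph take this to be $0$). The $r$-uniform generalized triangle is $\mathrm{T}_r=\{\{1,\ldots,r-1,r\},\{1,\ldots,r-1,r+1\},\{r,r+1,\ldots,2r-1\}\}$; $\mathcal{H}$ is $\mathrm{T}_r$-free if it contains no subhypergraph isomorphic to $\mathrm{T}_r$. *)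

theory Defs
  imports Main
begin

definition is_rgraph :: "nat \<Rightarrow> 'a set \<Rightarrow> 'a set set \<Rightarrow> bool" where
  "is_rgraph r V H \<longleftrightarrow> (\<forall>E\<in>H. E \<subseteq> V \<and> card E = r)"

definition shadow :: "nat \<Rightarrow> 'a set set \<Rightarrow> 'a set set" where
  "shadow r H = {e. card e = r - 1 \<and> (\<exists>E\<in>H. e \<subseteq> E)}"

definition nbhd :: "'a set \<Rightarrow> 'a set set \<Rightarrow> 'a set \<Rightarrow> 'a set" where
  "nbhd V H e = {v\<in>V. insert v e \<in> H}"

definition min_pos_codeg :: "nat \<Rightarrow> 'a set \<Rightarrow> 'a set set \<Rightarrow> nat" where
  "min_pos_codeg r V H =
     (if H = {} then 0 else Min ((\<lambda>e. card (nbhd V H e)) ` shadow r H))"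

definition gen_triangle :: "nat \<Rightarrow> nat set set" where
  "gen_triangle r = {{1..r}, {1..<r} \<union> {r+1}, {r..2*r-1}}"

definition contains_copy :: "nat set set \<Rightarrow> 'a set set \<Rightarrow> bool" where
  "contains_copy F H \<longleftrightarrow>
     (\<exists>f. inj_on f (\<Union>F) \<and> (\<forall>E\<in>F. f ` E \<in> H))"

definition T_free :: "nat \<Rightarrow> 'a set set \<Rightarrow> bool" where
  "T_free r H \<longleftrightarrow> \<not> contains_copy (gen_triangle r) H"

text \<open>co^+ex(n, T_r): max of min positive codegree over n-vertex T_r-free r-graphs,
  vertex set taken as {0..<n} (all n-vertex r-graphs are isomorphic to one on this set).\<close>
definition coplus_ex_T :: "nat \<Rightarrow> nat \<Rightarrow> nat" where
  "coplus_ex_T n r =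
     Max {min_pos_codeg r {0..<n} H | H. is_rgraph r {0..<n} H \<and> T_free r H}"

end

theory Submission
  imports Defs
begin


lemma shadow_finite:
  assumes "is_rgraph r V H" "finite V"
  shows "finite (shadow r H)"
proof -
  have "shadow r H \<subseteq> Pow V" using assms(1) unfolding shadow_def is_rgraph_def by blast
  then show ?thesis using assms(2) by (meson finite_Pow_iff finite_subset)
qed

lemma step_down:
  assumes rg: "is_rgraph r V H" and r3: "r \<ge> 3"
    and big: "\<forall>D\<in>shadow r H. card (nbhd V H D) \<ge> r"
    and cA: "card A = r - 1" and aA: "a \<notin> A" and bA: "b \<notin> A"
  shows "F \<in> H \<Longrightarrow> a \<in> F \<Longrightarrow> b \<in> F \<Longrightarrow> card (F \<inter> A) = k \<Longrightarrow>
         \<exists>F'\<in>H. a \<in> F' \<and> b \<in> F' \<and> F' \<inter> A = {}"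
proof (induction k arbitrary: F)
  case 0
  have "finite A" by (rule card_ge_0_finite) (use cA r3 in simp)
  then show ?case using 0 by auto
next
  case (Suc k)
  have fA: "finite A" by (rule card_ge_0_finite) (use cA r3 in simp)
  have "F \<inter> A \<noteq> {}" using Suc.prems(4) by auto
  then obtain z where z: "z \<in> F \<inter> A" by blast
  have cF: "card F = r" using rg Suc.prems(1) unfolding is_rgraph_def by auto
  have fF: "finite F" by (rule card_ge_0_finite) (use cF r3 in simp)
  define D where "D = F - {z}"
  have cD: "card D = r - 1" using cF z fF unfolding D_def by auto
  have Dsh: "D \<in> shadow r H" unfolding shadow_def D_def using cD Suc.prems(1) D_def by blast
  have "card (nbhd V H D) \<ge> r" using big Dsh by blast
  have "\<not> nbhd V H D \<subseteq> A"
  proof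
    assume "nbhd V H D \<subseteq> A"
    then have "card (nbhd V H D) \<le> r - 1" using card_mono[OF fA] cA by metis
    then show False using \<open>card (nbhd V H D) \<ge> r\<close> r3 by linarith
  qed
  then obtain y where y: "y \<in> nbhd V H D" "y \<notin> A" by blast
  have F'H: "insert y D \<in> H" using y unfolding nbhd_def by auto
  have aD: "a \<in> D" "b \<in> D" using Suc.prems z aA bA unfolding D_def by auto
  have "insert y D \<inter> A = (F \<inter> A) - {z}" using y(2) unfolding D_def by auto
  then have "card (insert y D \<inter> A) = k" using Suc.prems(4) z fA by auto
  then show ?case using Suc.IH[OF F'H] aD by auto
qed

lemma union_tri: "r \<ge> 3 \<Longrightarrow> \<Union> (gen_triangle r) = {1..2*r-1}"
  unfolding gen_triangle_def by auto

lemma key: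
  assumes rg: "is_rgraph r V H" and r3: "r \<ge> 3" and T: "T_free r H"
    and big: "\<forall>D\<in>shadow r H. card (nbhd V H D) \<ge> r"
    and cA: "card A = r - 1" and aA: "a \<notin> A" and bA: "b \<notin> A" and ab: "a \<noteq> b"
    and Ea: "insert a A \<in> H" and Eb: "insert b A \<in> H"
    and F: "F \<in> H" "a \<in> F" "b \<in> F"
  shows False
proof -
  obtain F' where F': "F' \<in> H" "a \<in> F'" "b \<in> F'" "F' \<inter> A = {}"
    using step_down[OF rg r3 big cA aA bA F refl] by blast
  have fA: "finite A" by (rule card_ge_0_finite) (use cA r3 in simp)
  have cF: "card F' = r" using rg F'(1) unfolding is_rgraph_def by auto
  have fF: "finite F'" by (rule card_ge_0_finite) (use cF r3 in simp)
  define G where "G = F' - {a, b}"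
  have cG: "card G = r - 2" using cF F' ab fF unfolding G_def by (simp add: card_Diff_subset)
  obtain g where g: "bij_betw g {1..<r} A" using finite_same_card_bij[of "{1..<r}" A] fA cA by auto
  have cI: "card {r+2..2*r-1} = r - 2" by simp
  obtain h where h: "bij_betw h {r+2..2*r-1} G"
    using finite_same_card_bij[of "{r+2..2*r-1}" G] cI cG fF unfolding G_def by auto
  define f where "f i = (if i < r then g i else if i = r then a else if i = r+1 then b else h i)" for i
  have GA: "G \<inter> A = {}" "a \<notin> G" "b \<notin> G" using F' unfolding G_def by auto
  have gA: "g i \<in> A" if "i \<in> {1..<r}" for i using g that bij_betwE by blast
  have hG: "h i \<in> G" if "i \<in> {r+2..2*r-1}" for i using h that bij_betwE by blast
  have ig: "inj_on g {1..<r}" using g bij_betw_def by blast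
  have ih: "inj_on h {r+2..2*r-1}" using h bij_betw_def by blast
  have f1: "f i = g i \<and> f i \<in> A" if "i \<in> {1..2*r-1}" "i < r" for i
    using that gA unfolding f_def by auto
  have f2: "f r = a" "f (r+1) = b" unfolding f_def by auto
  have f4: "f i = h i \<and> f i \<in> G" if "i \<in> {1..2*r-1}" "\<not> i < r" "i \<noteq> r" "i \<noteq> r+1" for i
  proof -
    have "i \<in> {r+2..2*r-1}" using that by auto
    then show ?thesis using that hG unfolding f_def by auto
  qed
  have inj: "inj_on f {1..2*r-1}"
  proof (rule inj_onI)
    fix i j assume i: "i \<in> {1..2*r-1}" and j: "j \<in> {1..2*r-1}" and eq: "f i = f j"
    show "i = j"
    proof (cases "i < r")
      case ti: True
      show ?thesis
      proof (cases "j < r")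
        case True
        then have "g i = g j" using f1 i j ti eq by metis
        moreover have "i \<in> {1..<r}" "j \<in> {1..<r}" using i j ti True by auto
        ultimately show ?thesis using ig inj_onD by metis
      next
        case False
        have "f j \<notin> A" using f2 f4[OF j False] aA bA GA by (cases "j = r"; cases "j = r+1") auto
        then show ?thesis using f1[OF i ti] eq by auto
      qed
    next
      case fi: False
      show ?thesis
      proof (cases "j < r")
        case True
        have "f i \<notin> A" using f2 f4[OF i fi] aA bA GA by (cases "i = r"; cases "i = r+1") auto
        then show ?thesis using f1[OF j True] eq by auto
      next
        case False
        show ?thesis
        proof (cases "i = r \<or> i = r+1 \<or> j = r \<or> j = r+1")
          case True
          then show ?thesis using f2 f4[OF i fi] f4[OF j False] eq ab GA
            by (cases "i = r"; cases "i = r+1"; cases "j = r"; cases "j = r+1") auto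
        next
          case nn: False
          then have "h i = h j" using f4[OF i fi] f4[OF j False] eq by metis
          moreover have "i \<in> {r+2..2*r-1}" "j \<in> {r+2..2*r-1}" using i j fi False nn by auto
          ultimately show ?thesis using ih inj_onD by metis
        qed
      qed
    qed
  qed
  have fg: "f ` {1..<r} = A"
  proof -
    have "f ` {1..<r} = g ` {1..<r}" by (rule image_cong[OF refl]) (simp add: f_def)
    then show ?thesis using bij_betw_imp_surj_on[OF g] by simp
  qed
  have fh: "f ` {r+2..2*r-1} = G"
  proof -
    have "f ` {r+2..2*r-1} = h ` {r+2..2*r-1}" by (rule image_cong[OF refl]) (simp add: f_def)
    then show ?thesis using bij_betw_imp_surj_on[OF h] by simp
  qed
  have e1: "f ` {1..r} = insert a A"
  proof -
    have "{1..r} = insert r {1..<r}" using r3 by auto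
    then show ?thesis by (simp only: image_insert f2 fg)
  qed
  have e2: "f ` ({1..<r} \<union> {r+1}) = insert b A"
  proof -
    have "{1..<r} \<union> {r+1} = insert (r+1) {1..<r}" by auto
    then show ?thesis by (simp only: image_insert f2 fg)
  qed
  have e3: "f ` {r..2*r-1} = F'"
  proof -
    have "{r..2*r-1} = insert r (insert (r+1) {r+2..2*r-1})" using r3 by auto
    then have "f ` {r..2*r-1} = insert a (insert b G)" by (simp only: image_insert f2 fh)
    also have "\<dots> = F'" using F' unfolding G_def by auto
    finally show ?thesis .
  qed
  have "contains_copy (gen_triangle r) H"
    unfolding contains_copy_def
  proof (intro exI conjI)
    show "inj_on f (\<Union> (gen_triangle r))" using inj union_tri[OF r3] by simp
    show "\<forall>E\<in>gen_triangle r. f ` E \<in> H"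
      unfolding gen_triangle_def using e1 e2 e3 Ea Eb F' by auto
  qed
  then show False using T unfolding T_free_def by blast
qed


lemma le_div_nat: "(0::nat) < r \<Longrightarrow> a * r \<le> n \<Longrightarrow> a \<le> n div r"
  by (metis div_le_mono nonzero_mult_div_cancel_right not_gr0)


lemma shadow_nonempty:
  assumes "is_rgraph r V H" "H \<noteq> {}" "r \<ge> 1"
  shows "shadow r H \<noteq> {}"
proof -
  obtain E where E: "E \<in> H" using assms(2) by blast
  have cE: "card E = r" using assms(1) E unfolding is_rgraph_def by auto
  then obtain x where x: "x \<in> E" using assms(3) by (metis card.empty ex_in_conv not_one_le_zero)
  have "finite E" using cE assms(3) card_ge_0_finite by (metis not_one_le_zero card.infinite)
  then have "card (E - {x}) = r - 1" using cE x by simp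
  then have "E - {x} \<in> shadow r H" unfolding shadow_def using E by blast
  then show ?thesis by blast
qed

lemma upper:
  assumes rg: "is_rgraph r V H" and T: "T_free r H" and fV: "finite V" and cV: "card V = n"
    and r3: "r \<ge> 3" and nb: "r * (r - 1) \<le> n"
  shows "min_pos_codeg r V H \<le> n div r"
proof (cases "H = {}")
  case True then show ?thesis unfolding min_pos_codeg_def by simp
next
  case HN: False
  define d where "d = Min ((\<lambda>e. card (nbhd V H e)) ` shadow r H)"
  have md: "min_pos_codeg r V H = d" unfolding min_pos_codeg_def d_def using HN by simp
  have fs: "finite (shadow r H)" using shadow_finite[OF rg fV] .
  have ns: "shadow r H \<noteq> {}" using shadow_nonempty[OF rg HN] r3 by simp
  have dle: "d \<le> card (nbhd V H D)" if "D \<in> shadow r H" for D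
    unfolding d_def using fs that by simp
  show ?thesis
  proof (cases "d \<le> r - 1")
    case True
    have "(r - 1) * r \<le> n" using nb by (simp add: mult.commute)
    then have "r - 1 \<le> n div r" using r3 le_div_nat[of r "r - 1" n] by simp
    then show ?thesis using True md by simp
  next
    case False
    have big: "\<forall>D\<in>shadow r H. card (nbhd V H D) \<ge> r"
    proof
      fix D assume "D \<in> shadow r H"
      then have "d \<le> card (nbhd V H D)" by (rule dle)
      then show "card (nbhd V H D) \<ge> r" using False by linarith
    qed
    obtain E where E: "E \<in> H" using HN by blast
    have cE: "card E = r" using rg E unfolding is_rgraph_def by auto
    have fE: "finite E" by (rule card_ge_0_finite) (use cE r3 in simp)
    define S where "S v = nbhd V H (E - {v})" for v
    have Ssh: "E - {v} \<in> shadow r H" if "v \<in> E" for v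
      unfolding shadow_def using E cE fE that by auto
    have fS: "finite (S v)" for v unfolding S_def nbhd_def using fV by simp
    have SV: "\<Union> (S ` E) \<subseteq> V" unfolding S_def nbhd_def by auto
    have notin: "u \<notin> E - {v}" if "u \<in> S v" "v \<in> E" for u v
    proof
      assume u: "u \<in> E - {v}"
      have "insert u (E - {v}) \<in> H" using that unfolding S_def nbhd_def by auto
      then have "card (insert u (E - {v})) = r" using rg unfolding is_rgraph_def by auto
      moreover have "insert u (E - {v}) = E - {v}" using u by auto
      moreover have "card (E - {v}) = r - 1" using cE fE that(2) by simp
      ultimately show False using r3 by simp
    qed
    have disj: "\<forall>v\<in>E. \<forall>w\<in>E. v \<noteq> w \<longrightarrow> S v \<inter> S w = {}"
    proof (intro ballI impI)
      fix v w assume v: "v \<in> E" and w: "w \<in> E" and vw: "v \<noteq> w"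
      show "S v \<inter> S w = {}"
      proof (rule ccontr)
        assume "S v \<inter> S w \<noteq> {}"
        then obtain u where u: "u \<in> S v" "u \<in> S w" by blast
        have u1: "u \<notin> E - {v}" "u \<notin> E - {w}" using notin u v w by auto
        have uE: "u \<notin> E" using u1 vw by auto
        have Eu: "insert u (E - {v}) \<in> H" "insert u (E - {w}) \<in> H"
          using u unfolding S_def nbhd_def by auto
        have Ev: "insert v (E - {v}) \<in> H" using E v by (simp add: insert_absorb)
        have cA: "card (E - {v}) = r - 1" using cE fE v by simp
        have a1: "v \<notin> E - {v}" by simp
        have uv: "v \<noteq> u" using uE v by blast
        have m1: "v \<in> insert u (E - {w})" using v vw by simp
        have m2: "u \<in> insert u (E - {w})" by simp
        show False
          by (rule key[OF rg r3 T big cA a1 u1(1) uv Ev Eu(1) Eu(2) m1 m2])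
      qed
    qed
    have "card (\<Union> (S ` E)) = (\<Sum>v\<in>E. card (S v))"
      using card_UN_disjoint[OF fE _ disj] fS by simp
    moreover have "(\<Sum>v\<in>E. card (S v)) \<ge> r * d"
    proof -
      have "(\<Sum>v\<in>E. card (S v)) \<ge> (\<Sum>v\<in>E. d)"
      proof (rule sum_mono)
        fix v assume "v \<in> E"
        then show "d \<le> card (S v)" unfolding S_def by (rule dle[OF Ssh])
      qed
      then show ?thesis using cE by simp
    qed
    moreover have "card (\<Union> (S ` E)) \<le> n" using card_mono[OF fV SV] cV by simp
    ultimately have "r * d \<le> n" by linarith
    then have "d * r \<le> n" by (simp add: mult.commute)
    then have "d \<le> n div r" using r3 le_div_nat[of r d n] by simp
    then show ?thesis using md by simp
  qed
qed



definition H0 :: "nat \<Rightarrow> nat \<Rightarrow> nat set set" where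
  "H0 r q = {E. E \<subseteq> {0..<r*q} \<and> card E = r \<and> inj_on (\<lambda>x. x div q) E}"

lemma div_lt_r: "x < r * q \<Longrightarrow> x div (q::nat) < r"
  by (metis div_less_iff_less_mult mult.commute mult_zero_right not_less0 not_gr0)

lemma H0_rgraph: "r * q \<le> n \<Longrightarrow> is_rgraph r {0..<n} (H0 r q)"
  unfolding is_rgraph_def H0_def by auto

lemma H0_nonempty:
  assumes q: "q > 0"
  shows "H0 r q \<noteq> {}"
proof -
  define E where "E = (\<lambda>j. j * q) ` {0..<r}"
  have inj: "inj_on (\<lambda>j. j * q) {0..<r}" using q by (auto simp: inj_on_def)
  have "card E = r" unfolding E_def using card_image[OF inj] by simp
  moreover have "E \<subseteq> {0..<r*q}" unfolding E_def using q by auto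
  moreover have "inj_on (\<lambda>x. x div q) E" unfolding E_def using q by (auto simp: inj_on_def)
  ultimately have "E \<in> H0 r q" unfolding H0_def by blast
  then show ?thesis by blast
qed

lemma card_miss1:
  assumes "P \<subseteq> {0..<(r::nat)}" "card P = r - 1" "r \<ge> 1"
    "x \<in> {0..<r}" "y \<in> {0..<r}" "x \<notin> P" "y \<notin> P"
  shows "x = y"
proof (rule ccontr)
  assume "x \<noteq> y"
  then have "insert x (insert y P) \<subseteq> {0..<r}" using assms by auto
  then have "card (insert x (insert y P)) \<le> r" by (metis card_atLeastLessThan card_mono finite_atLeastLessThan minus_nat.diff_0)
  moreover have "finite P" using assms(1) finite_subset by blast
  ultimately show False using assms \<open>x \<noteq> y\<close> by simp
qed

lemma H0_Tfree:
  assumes r3: "r \<ge> 3" and q: "q > 0"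
  shows "T_free r (H0 r q)"
  unfolding T_free_def contains_copy_def
proof
  assume "\<exists>f. inj_on f (\<Union> (gen_triangle r)) \<and> (\<forall>E\<in>gen_triangle r. f ` E \<in> H0 r q)"
  then obtain f where inj: "inj_on f {1..2*r-1}" and im: "\<forall>E\<in>gen_triangle r. f ` E \<in> H0 r q"
    using union_tri[OF r3] by auto
  define p where "p x = x div q" for x
  have e1: "f ` {1..r} \<in> H0 r q" and e2: "f ` ({1..<r} \<union> {r+1}) \<in> H0 r q"
    and e3: "f ` {r..2*r-1} \<in> H0 r q" using im unfolding gen_triangle_def by auto
  define X where "X = f ` {1..<r}"
  have s1: "f ` {1..r} = insert (f r) X"
  proof -
    have "{1..r} = insert r {1..<r}" using r3 by auto
    then show ?thesis unfolding X_def by (simp only: image_insert)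
  qed
  have s2: "f ` ({1..<r} \<union> {r+1}) = insert (f (r+1)) X" unfolding X_def by auto
  have injX: "inj_on f {1..<r}" using inj by (rule inj_on_subset) auto
  have cX: "card X = r - 1" unfolding X_def using card_image[OF injX] by simp
  have frX: "f r \<notin> X"
  proof
    assume "f r \<in> X"
    then obtain x where x: "x \<in> {1..<r}" "f r = f x" unfolding X_def by auto
    have "x \<in> {1..2*r-1}" "r \<in> {1..2*r-1}" using x(1) r3 by auto
    then have "r = x" using inj x(2) inj_onD by metis
    then show False using x(1) by auto
  qed
  have fr1X: "f (r+1) \<notin> X"
  proof
    assume "f (r+1) \<in> X"
    then obtain x where x: "x \<in> {1..<r}" "f (r+1) = f x" unfolding X_def by auto
    have "x \<in> {1..2*r-1}" "(r+1) \<in> {1..2*r-1}" using x(1) r3 by auto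
    then have "(r+1) = x" using inj x(2) inj_onD by metis
    then show False using x(1) by auto
  qed
  have "insert (f r) X \<in> H0 r q" using e1 s1 by simp
  then have h1: "insert (f r) X \<subseteq> {0..<r*q}" "inj_on p (insert (f r) X)"
    unfolding H0_def p_def by auto
  have "insert (f (r+1)) X \<in> H0 r q" using e2 s2 by simp
  then have h2: "insert (f (r+1)) X \<subseteq> {0..<r*q}" "inj_on p (insert (f (r+1)) X)"
    unfolding H0_def p_def by auto
  have pX: "p ` X \<subseteq> {0..<r}" using h1 div_lt_r unfolding p_def by auto
  have cpX: "card (p ` X) = r - 1" using cX card_image h1(2) by (metis inj_on_insert)
  have a1: "p (f r) \<notin> p ` X" using h1(2) frX by auto
  have a2: "p (f (r+1)) \<notin> p ` X" using h2(2) fr1X by auto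
  have b1: "p (f r) \<in> {0..<r}" "p (f (r+1)) \<in> {0..<r}" using h1 h2 div_lt_r unfolding p_def by auto
  have eqp: "p (f r) = p (f (r+1))" using card_miss1[OF pX cpX _ b1 a1 a2] r3 by simp
  have "inj_on p (f ` {r..2*r-1})" using e3 unfolding H0_def p_def by auto
  moreover have "f r \<in> f ` {r..2*r-1}" "f (r+1) \<in> f ` {r..2*r-1}" using r3 by auto
  ultimately have "f r = f (r+1)" using eqp inj_onD by metis
  moreover have "r \<in> {1..2*r-1}" "r+1 \<in> {1..2*r-1}" using r3 by auto
  ultimately show False using inj inj_onD by fastforce
qed

lemma H0_codeg:
  assumes r3: "r \<ge> 3" and q: "q > 0" and rq: "r * q \<le> n"
  shows "q \<le> min_pos_codeg r {0..<n} (H0 r q)"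
proof -
  have rg: "is_rgraph r {0..<n} (H0 r q)" using H0_rgraph[OF rq] .
  have HN: "H0 r q \<noteq> {}" using H0_nonempty[OF q] .
  have fs: "finite (shadow r (H0 r q))" using shadow_finite[OF rg] by simp
  have ns: "shadow r (H0 r q) \<noteq> {}" using shadow_nonempty[OF rg HN] r3 by simp
  have each: "q \<le> card (nbhd {0..<n} (H0 r q) e)" if e: "e \<in> shadow r (H0 r q)" for e
  proof -
    have e': "card e = r - 1 \<and> (\<exists>E\<in>H0 r q. e \<subseteq> E)" using e unfolding shadow_def by simp
    then obtain E where E: "E \<in> H0 r q" "e \<subseteq> E" by blast
    have ce: "card e = r - 1" using e' by blast
    have ES: "E \<subseteq> {0..<r*q}" and injE: "inj_on (\<lambda>x. x div q) E" using E(1) unfolding H0_def by simp_all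
    have inje: "inj_on (\<lambda>x. x div q) e" using inj_on_subset[OF injE E(2)] .
    have eS: "e \<subseteq> {0..<r*q}" using subset_trans[OF E(2) ES] .
    have fe: "finite e" using finite_subset[OF eS] by simp
    have pe: "(\<lambda>x. x div q) ` e \<subseteq> {0..<r}"
    proof
      fix y assume "y \<in> (\<lambda>x. x div q) ` e"
      then obtain x where x: "x \<in> e" "y = x div q" by blast
      then have "x < r * q" using eS by auto
      then show "y \<in> {0..<r}" using x(2) div_lt_r by simp
    qed
    have cpe: "card ((\<lambda>x. x div q) ` e) = r - 1" using card_image[OF inje] ce by simp
    have "\<not> {0..<r} \<subseteq> (\<lambda>x. x div q) ` e"
    proof
      assume "{0..<r} \<subseteq> (\<lambda>x. x div q) ` e"
      then have "card {0..<r} \<le> card ((\<lambda>x. x div q) ` e)"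
        by (rule card_mono[OF finite_imageI[OF fe]])
      then show False using r3 cpe by simp
    qed
    then obtain j where j0: "j \<in> {0..<r}" "j \<notin> (\<lambda>x. x div q) ` e" by blast
    then have j: "j < r" "j \<notin> (\<lambda>x. x div q) ` e" by simp_all
    have sub: "{j*q..<j*q+q} \<subseteq> nbhd {0..<n} (H0 r q) e"
    proof
      fix v assume v: "v \<in> {j*q..<j*q+q}"
      have vj: "v div q = j"
      proof (rule div_nat_eqI)
        show "q * j \<le> v" using v by (simp add: mult.commute)
        show "v < q * Suc j" using v by (simp add: mult.commute)
      qed
      have "v < r * q"
      proof -
        have "j * q + q = (j+1) * q" by simp
        also have "\<dots> \<le> r * q" using j(1) by (intro mult_le_mono1) simp
        finally show ?thesis using v by simp
      qed
      then have vn: "v < n" using rq by simp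
      have ve: "v \<notin> e"
      proof
        assume "v \<in> e"
        then have "v div q \<in> (\<lambda>x. x div q) ` e" by (rule imageI)
        then show False using j(2) vj by simp
      qed
      have "card (insert v e) = r" using ve fe ce r3 by simp
      moreover have "insert v e \<subseteq> {0..<r*q}" using \<open>v < r*q\<close> ES E(2) by auto
      moreover have "inj_on (\<lambda>x. x div q) (insert v e)"
      proof -
        have "e - {v} = e" using ve by simp
        then show ?thesis using inje j(2) vj by simp
      qed
      ultimately have "insert v e \<in> H0 r q" unfolding H0_def by blast
      then show "v \<in> nbhd {0..<n} (H0 r q) e" unfolding nbhd_def using vn by simp
    qed
    have "finite (nbhd {0..<n} (H0 r q) e)" unfolding nbhd_def by simp
    then have "card {j*q..<j*q+q} \<le> card (nbhd {0..<n} (H0 r q) e)" using sub by (rule card_mono)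
    then show ?thesis by simp
  qed
  have "q \<le> Min ((\<lambda>e. card (nbhd {0..<n} (H0 r q) e)) ` shadow r (H0 r q))"
  proof (subst Min_ge_iff)
    show "finite ((\<lambda>e. card (nbhd {0..<n} (H0 r q) e)) ` shadow r (H0 r q))" using fs by simp
    show "(\<lambda>e. card (nbhd {0..<n} (H0 r q) e)) ` shadow r (H0 r q) \<noteq> {}" using ns by simp
    show "\<forall>a\<in>(\<lambda>e. card (nbhd {0..<n} (H0 r q) e)) ` shadow r (H0 r q). q \<le> a" using each by blast
  qed
  then show ?thesis unfolding min_pos_codeg_def using HN by simp
qed



theorem corollary1p3:
  fixes r n :: nat
  assumes "r \<ge> 3"
    and "2 * n \<ge> (r - 1) * (2 * r + 1)"
  shows "coplus_ex_T n r = n div r"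
proof -
  have r3: "r \<ge> 3" using assms(1) .
  have nb: "r * (r - 1) \<le> n"
  proof -
    obtain s where s: "r = Suc s" using r3 by (cases r) auto
    have "2 * (r * (r - 1)) \<le> (r - 1) * (2 * r + 1)" unfolding s by (simp add: algebra_simps)
    then show ?thesis using assms(2) by linarith
  qed
  define q where "q = n div r"
  have "r * 2 \<le> r * (r - 1)" using r3 by (intro mult_le_mono2) simp
  then have "r \<le> n" using nb by linarith
  then have qp: "q > 0" unfolding q_def using r3 le_div_nat[of r 1 n] by simp
  have rq: "r * q \<le> n" unfolding q_def by (rule times_div_less_eq_dividend)
  define S where "S = {min_pos_codeg r {0..<n} H | H. is_rgraph r {0..<n} H \<and> T_free r H}"
  have "S \<subseteq> (\<lambda>H. min_pos_codeg r {0..<n} H) ` Pow (Pow {0..<n})"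
    unfolding S_def is_rgraph_def by auto
  then have fS: "finite S" by (rule finite_subset) simp
  have inS: "min_pos_codeg r {0..<n} (H0 r q) \<in> S"
    unfolding S_def using H0_rgraph[OF rq] H0_Tfree[OF r3 qp] by blast
  have le: "x \<le> q" if "x \<in> S" for x
    using that upper[of r "{0..<n}" _ n, OF _ _ _ _ r3 nb] unfolding S_def q_def by auto
  have "Max S \<le> q" using fS inS le by (subst Max_le_iff) auto
  moreover have "q \<le> Max S"
    using H0_codeg[OF r3 qp rq] Max_ge[OF fS inS] by linarith
  ultimately show ?thesis unfolding coplus_ex_T_def S_def[symmetric] q_def by simp
qed


end
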